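(* Let $Y$ be a real Banach space with a finite-dimensional decomposition $(Q_j)_{j\ge1}$ and let $X$ be a closed subspace of $Y$. Then for every $\delta>0$ there exists an invertible bounded operator $T:Y\to Y$ with $\|T-I\|<\delta$ such that $X$ satisfies the density condition with respect to the FDD $(TQ_jT^{-1})_{j\ge1}$.
   Context: A finite-dimensional decomposition (FDD) of $Y$ is a sequence of finite-rank projections $(Q_j)_{j\ge1}$ with $Q_iQ_j=0$ for $i\ne j$ and $y=\sum_j Q_jy$ for all $y\in Y$. A subspace $X$ of $Y$ satisfies the density condition with respect to the FDD $(Q_j)$ if there is a dense subset $D$ of $X$ such that for every $x\in D$ there is $n=n(x)\in\mathbb N$ with $x=\sum_{j=1}^nQ_jx$. *)

theory Defs
  imports "HOL-Analysis.Analysis"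
begin

text \<open>Finite-dimensional decomposition, indexed by j \<ge> 1 (the value at 0 is ignored).\<close>
definition is_FDD :: "(nat \<Rightarrow> 'a::real_normed_vector \<Rightarrow> 'a) \<Rightarrow> bool" where
  "is_FDD Q \<longleftrightarrow>
     (\<forall>j\<ge>1. bounded_linear (Q j) \<and> Q j \<circ> Q j = Q j \<and>
             (\<exists>B. finite B \<and> range (Q j) \<subseteq> span B)) \<and>
     (\<forall>i\<ge>1. \<forall>j\<ge>1. i \<noteq> j \<longrightarrow> (\<forall>y. Q i (Q j y) = 0)) \<and>
     (\<forall>y. (\<lambda>n. \<Sum>j\<in>{1..n}. Q j y) \<longlonglongrightarrow> y)"

definition density_condition :: "'a::real_normed_vector set \<Rightarrow> (nat \<Rightarrow> 'a \<Rightarrow> 'a) \<Rightarrow> bool" where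
  "density_condition X Q \<longleftrightarrow>
     (\<exists>D. D \<subseteq> X \<and> X \<subseteq> closure D \<and>
          (\<forall>x\<in>D. \<exists>n::nat. x = (\<Sum>j\<in>{1..n}. Q j x)))"

end

theory Submission
  imports Defs
begin


lemma rep_insert:
  fixes F :: "'a::real_vector set"
  assumes ind: "independent (insert b F)" and bF: "b \<notin> F" and w: "w \<in> span F"
  shows "representation (insert b F) (k *\<^sub>R b + w) = (\<lambda>v. (if v = b then k else 0) + representation F w v)"
proof -
  have bs: "b \<in> span (insert b F)" by (simp add: span_base)
  have ws: "w \<in> span (insert b F)" using w span_mono[of F "insert b F"] by auto
  have "representation (insert b F) (k *\<^sub>R b + w) = (\<lambda>v. representation (insert b F) (k *\<^sub>R b) v + representation (insert b F) w v)"
    by (rule representation_add[OF ind]) (auto simp: ws span_scale bs)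
  also have "\<dots> = (\<lambda>v. k * representation (insert b F) b v + representation (insert b F) w v)"
    using representation_scale[OF ind bs] by simp
  also have "\<dots> = (\<lambda>v. (if v = b then k else 0) + representation F w v)"
    using representation_basis[OF ind, of b] representation_extend[OF ind w subset_insertI] by auto
  finally show ?thesis .
qed

lemma fd_bound:
  fixes W :: "'a::real_normed_vector set"
  assumes "finite W" "independent W"
  shows "closed (span W) \<and> (\<exists>C\<ge>0. \<forall>x\<in>span W. \<forall>w. \<bar>representation W x w\<bar> \<le> C * norm x)"
  using assms
proof (induction W rule: finite_induct)
  case empty
  then show ?case by (auto simp: representation_zero)
next
  case (insert b F)
  have indF: "independent F" and bM: "b \<notin> span F"
    using insert.prems insert.hyps by (auto simp: independent_insert)
  from insert.IH[OF indF] obtain C' where clM: "closed (span F)" and C': "C' \<ge> 0"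
    "\<And>x w. x \<in> span F \<Longrightarrow> \<bar>representation F x w\<bar> \<le> C' * norm x" by blast
  define d where "d = infdist b (span F)"
  have dpos: "d > 0" unfolding d_def
    by (rule infdist_pos_not_in_closed[OF clM]) (use bM span_zero in auto)
  have key: "\<bar>k\<bar> * d \<le> norm (k *\<^sub>R b + w)" if w: "w \<in> span F" for k w
  proof (cases "k = 0")
    case True then show ?thesis by simp
  next
    case False
    have "- (1/k) *\<^sub>R w \<in> span F" using w by (simp add: span_scale span_neg)
    then have "d \<le> dist b (- (1/k) *\<^sub>R w)" unfolding d_def by (rule infdist_le)
    also have "dist b (- (1/k) *\<^sub>R w) = norm ((1/k) *\<^sub>R (k *\<^sub>R b + w))"
      using False by (simp add: dist_norm algebra_simps)
    also have "\<dots> = norm (k *\<^sub>R b + w) / \<bar>k\<bar>" by simp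
    finally show ?thesis using False by (simp add: field_simps)
  qed
  have decomp: "\<exists>k w. x = k *\<^sub>R b + w \<and> w \<in> span F" if "x \<in> span (insert b F)" for x
    using that span_breakdown_eq[of x b F] by (metis add.commute diff_add_cancel)
  define C where "C = max (1/d) (C' * (1 + norm b / d))"
  have "C \<ge> 0" using dpos unfolding C_def by (simp add: le_max_iff_disj)
  moreover have "\<bar>representation (insert b F) x v\<bar> \<le> C * norm x" if x: "x \<in> span (insert b F)" for x v
  proof -
    obtain k w where xe: "x = k *\<^sub>R b + w" and w: "w \<in> span F" using decomp[OF x] by blast
    have rep: "representation (insert b F) x v = (if v = b then k else 0) + representation F w v"
      using rep_insert[OF insert.prems insert.hyps(2) w] xe by simp
    have kb: "\<bar>k\<bar> \<le> norm x / d" using key[OF w] dpos xe by (simp add: field_simps)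
    have wb: "norm w \<le> (1 + norm b / d) * norm x"
    proof -
      have "norm w \<le> norm x + \<bar>k\<bar> * norm b" using xe
        by (metis add_diff_cancel_left' norm_diff_ineq norm_scaleR add.commute diff_le_eq norm_triangle_ineq4 order_trans)
      also have "\<dots> \<le> norm x + norm x / d * norm b" using mult_right_mono[OF kb norm_ge_zero[of b]] by simp
      finally show ?thesis by (simp add: algebra_simps)
    qed
    show ?thesis
    proof (cases "v = b")
      case True
      then have "representation F w v = 0" using insert.hyps(2) representation_ne_zero by blast
      then have "\<bar>representation (insert b F) x v\<bar> = \<bar>k\<bar>" using rep True by simp
      also have "\<dots> \<le> (1/d) * norm x" using kb by simp
      also have "\<dots> \<le> C * norm x" unfolding C_def by (intro mult_right_mono) auto
      finally show ?thesis .
    next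
      case False
      then have "\<bar>representation (insert b F) x v\<bar> = \<bar>representation F w v\<bar>" using rep by simp
      also have "\<dots> \<le> C' * norm w" using C'(2)[OF w] .
      also have "\<dots> \<le> C' * ((1 + norm b / d) * norm x)" using wb C' by (simp add: mult_left_mono)
      also have "\<dots> \<le> C * norm x" unfolding C_def
        by (metis max.cobounded2 mult.assoc mult_right_mono norm_ge_zero)
      finally show ?thesis .
    qed
  qed
  moreover have "closed (span (insert b F))"
  proof (rule closed_sequential_limits[THEN iffD2], intro allI impI, elim conjE)
    fix s l assume s: "\<forall>n. s n \<in> span (insert b F)" and sl: "s \<longlonglongrightarrow> l"
    define t where "t n = representation (insert b F) (s n) b" for n
    define w where "w n = s n - t n *\<^sub>R b" for n
    have sdec: "s n = t n *\<^sub>R b + w n \<and> w n \<in> span F" for n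
    proof -
      obtain k v where e: "s n = k *\<^sub>R b + v" and v: "v \<in> span F" using decomp s by blast
      have "t n = k" unfolding t_def e using rep_insert[OF insert.prems insert.hyps(2) v]
        insert.hyps(2) representation_ne_zero by fastforce
      then show ?thesis using e v by (simp add: w_def)
    qed
    have "Cauchy t"
    proof (rule metric_CauchyI)
      fix e :: real assume e: "e > 0"
      from LIMSEQ_imp_Cauchy[OF sl] have "Cauchy s" .
      then obtain N where N: "\<forall>m\<ge>N. \<forall>n\<ge>N. dist (s m) (s n) < e * d"
        using e dpos unfolding Cauchy_def by (meson mult_pos_pos)
      show "\<exists>N. \<forall>m\<ge>N. \<forall>n\<ge>N. dist (t m) (t n) < e"
      proof (intro exI allI impI)
        fix m n assume "m \<ge> N" "n \<ge> N"
        then have lt: "norm (s m - s n) < e * d" using N by (simp add: dist_norm)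
        have "s m - s n = (t m - t n) *\<^sub>R b + (w m - w n)" using sdec[of m] sdec[of n]
          by (simp add: algebra_simps)
        moreover have "w m - w n \<in> span F" using sdec by (simp add: span_diff)
        ultimately have "\<bar>t m - t n\<bar> * d \<le> norm (s m - s n)" using key by metis
        with lt dpos have "\<bar>t m - t n\<bar> * d < e * d" by linarith
        with dpos show "dist (t m) (t n) < e" by (simp add: dist_real_def)
      qed
    qed
    then obtain \<tau> where tt: "t \<longlonglongrightarrow> \<tau>" using Cauchy_convergent_iff convergent_def by blast
    have "w \<longlonglongrightarrow> l - \<tau> *\<^sub>R b" unfolding w_def by (intro tendsto_intros sl tt)
    moreover have "\<forall>n. w n \<in> span F" using sdec by blast
    ultimately have "l - \<tau> *\<^sub>R b \<in> span F" using clM closed_sequentially by blast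
    then show "l \<in> span (insert b F)" using span_breakdown_eq by blast
  qed
  ultimately show ?case by blast
qed




lemma sep_functional:
  fixes P :: "nat \<Rightarrow> 'a::real_normed_vector \<Rightarrow> 'a" and B :: "nat \<Rightarrow> 'a set"
  assumes blP: "\<And>n. bounded_linear (P n)"
    and fB: "\<And>n. finite (B n)" and rB: "\<And>n. range (P n) \<subseteq> span (B n)"
    and conv: "\<And>y. (\<lambda>n. P n y) \<longlonglongrightarrow> y"
    and fV: "finite V" and xV: "x \<notin> span V"
  shows "\<exists>\<phi>::'a \<Rightarrow> real. bounded_linear \<phi> \<and> (\<forall>v\<in>V. \<phi> v = 0) \<and> \<phi> x = 1"
proof -
  obtain W0 where W0: "W0 \<subseteq> V" "independent W0" "V \<subseteq> span W0"
    using maximal_independent_subset[of V] by blast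
  have fW0: "finite W0" using W0 fV finite_subset by blast
  have spW0: "span W0 = span V" using W0 by (metis span_eq span_superset subset_trans)
  define W where "W = insert x W0"
  have xW0: "x \<notin> span W0" using xV spW0 by simp
  have indW: "independent W" unfolding W_def using W0 xW0 by (simp add: independent_insert)
  have fW: "finite W" using fW0 by (simp add: W_def)
  obtain C where C: "C \<ge> 0" "\<And>m w. m \<in> span W \<Longrightarrow> \<bar>representation W m w\<bar> \<le> C * norm m"
    using fd_bound[OF fW indW] by blast
  define g where "g n = (\<Sum>w\<in>W. norm (P n w - w))" for n
  have "g \<longlonglongrightarrow> (\<Sum>w\<in>W. norm (w - w))" unfolding g_def
    by (intro tendsto_intros conv)
  then have "g \<longlonglongrightarrow> 0" by simp
  moreover have "0 < 1 / (C + 1)" using C by simp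
  ultimately obtain n where gn: "g n < 1 / (C + 1)"
    by (metis (no_types, lifting) LIMSEQ_D diff_zero le_refl real_norm_def abs_less_iff)
  have lin: "linear (P n)" using blP bounded_linear.linear by blast
  have gn0: "g n \<ge> 0" unfolding g_def by (simp add: sum_nonneg)
  have inj: "m = 0" if m: "m \<in> span W" and Pm: "P n m = 0" for m
  proof (rule ccontr)
    assume "m \<noteq> 0"
    have me: "m = (\<Sum>w\<in>W. representation W m w *\<^sub>R w)"
      using sum_representation_eq[OF indW m fW subset_refl] by simp
    have "P n m - m = (\<Sum>w\<in>W. representation W m w *\<^sub>R (P n w - w))"
      apply (subst (1 2) me)
      by (simp add: linear_sum[OF lin] linear_scale[OF lin] scaleR_diff_right sum_subtractf)
    then have "norm m = norm (\<Sum>w\<in>W. representation W m w *\<^sub>R (P n w - w))" using Pm by (metis diff_zero norm_minus_commute)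
    also have "\<dots> \<le> (\<Sum>w\<in>W. \<bar>representation W m w\<bar> * norm (P n w - w))"
      by (rule order_trans[OF norm_sum]) simp
    also have "\<dots> \<le> (\<Sum>w\<in>W. C * norm m * norm (P n w - w))"
      by (intro sum_mono mult_right_mono C(2)[OF m]) simp
    also have "\<dots> = C * norm m * g n" by (simp add: g_def sum_distrib_left)
    also have "\<dots> < norm m"
    proof -
      have "g n * (C + 1) < 1" using gn C by (simp add: field_simps)
      then have "C * g n < 1" using gn0 by (simp add: algebra_simps)
      then show ?thesis using \<open>m \<noteq> 0\<close> by (simp add: mult.commute mult.left_commute)
    qed
    finally show False by simp
  qed
  define u where "u = P n x"
  define U where "U = P n ` W0"
  have spU: "span U = P n ` span W0" unfolding U_def by (rule span_linear_image[OF lin])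
  have uU: "u \<notin> span U"
  proof
    assume "u \<in> span U"
    then obtain v0 where v0: "v0 \<in> span W0" "P n v0 = u" using spU by auto
    have "P n (x - v0) = 0" using v0 by (simp add: u_def linear_diff[OF lin])
    moreover have "x - v0 \<in> span W" unfolding W_def
      using v0(1) span_mono[of W0 "insert x W0"]
      by (intro span_diff) (auto simp: span_base)
    ultimately have "x - v0 = 0" using inj by blast
    then show False using v0 xW0 by simp
  qed
  obtain G where G: "G \<subseteq> U" "independent G" "U \<subseteq> span G"
    using maximal_independent_subset[of U] by blast
  have spG: "span G = span U" using G by (metis span_eq span_superset subset_trans)
  define G' where "G' = insert u G"
  have indG': "independent G'" unfolding G'_def using G uU spG by (simp add: independent_insert)
  obtain H where H: "G' \<subseteq> H" "H \<subseteq> G' \<union> B n" "independent H" "G' \<union> B n \<subseteq> span H"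
    using maximal_independent_subset_extend[of G' "G' \<union> B n"] indG' by blast
  have fG: "finite G" using G fW0 U_def finite_subset by blast
  have fH: "finite H" using H(2) fG fB[of n] by (simp add: G'_def finite_subset)
  obtain CH where CH: "CH \<ge> 0" "\<And>m w. m \<in> span H \<Longrightarrow> \<bar>representation H m w\<bar> \<le> CH * norm m"
    using fd_bound[OF fH H(3)] by blast
  have PH: "P n y \<in> span H" for y
  proof -
    have "span (B n) \<subseteq> span H" using H(4) by (meson le_sup_iff span_minimal subspace_span)
    then show ?thesis using rB[of n] by auto
  qed
  define \<phi> where "\<phi> y = representation H (P n y) u" for y
  obtain K where K: "\<And>y. norm (P n y) \<le> norm y * K"
    using bounded_linear.bounded[OF blP[of n]] by blast
  have bl: "bounded_linear \<phi>"
  proof (rule bounded_linear_intro)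
    show "\<phi> (a + b) = \<phi> a + \<phi> b" for a b
      unfolding \<phi>_def linear_add[OF lin] using representation_add[OF H(3) PH PH] by simp
    show "\<phi> (r *\<^sub>R a) = r *\<^sub>R \<phi> a" for r a
      unfolding \<phi>_def linear_scale[OF lin] using representation_scale[OF H(3) PH] by simp
    show "norm (\<phi> a) \<le> norm a * (CH * K)" for a
    proof -
      have "norm (\<phi> a) \<le> CH * norm (P n a)" unfolding \<phi>_def using CH(2)[OF PH] by simp
      also have "\<dots> \<le> CH * (norm a * K)" using K CH(1) by (simp add: mult_left_mono)
      finally show ?thesis by (simp add: algebra_simps)
    qed
  qed
  have "\<phi> v = 0" if v: "v \<in> V" for v
  proof -
    have "P n v \<in> span G" using v W0(3) spU spG by auto
    then have "representation H (P n v) = representation G (P n v)"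
      using representation_extend[OF H(3) _ ] H(1) G'_def by auto
    moreover have "u \<notin> G" using uU spG span_base by blast
    ultimately show ?thesis unfolding \<phi>_def using representation_ne_zero by metis
  qed
  moreover have "\<phi> x = 1"
  proof -
    have "u \<in> H" using H(1) G'_def by auto
    then show ?thesis unfolding \<phi>_def u_def[symmetric] using representation_basis[OF H(3)] by simp
  qed
  ultimately show ?thesis using bl by blast
qed




lemma neumann:
  fixes S :: "'a::banach \<Rightarrow> 'a"
  assumes lin: "linear S" and k: "0 \<le> \<kappa>" "\<kappa> < 1"
    and b: "\<And>y. norm (S y - y) \<le> \<kappa> * norm y"
  shows "bij S \<and> linear (inv S) \<and> (\<forall>y. norm (inv S y) \<le> norm y / (1 - \<kappa>))"
proof -
  have low: "(1 - \<kappa>) * norm y \<le> norm (S y)" for y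
  proof -
    have "norm y = norm (S y - (S y - y))" by simp
    also have "\<dots> \<le> norm (S y) + norm (S y - y)" by (rule norm_triangle_ineq4)
    finally have "norm y \<le> norm (S y) + norm (S y - y)" .
    then show ?thesis using b[of y] by (simp add: algebra_simps)
  qed
  have inj: "inj S"
  proof (rule injI)
    fix y z assume "S y = S z"
    then have "S (y - z) = 0" by (simp add: linear_diff[OF lin])
    then have "(1 - \<kappa>) * norm (y - z) \<le> 0" using low[of "y - z"] by simp
    then show "y = z" using k by (simp add: mult_le_0_iff)
  qed
  have surj: "surj S"
  proof -
    have "\<exists>y. S y = c" for c
    proof -
      define f where "f y = c + y - S y" for y
      have "\<exists>!y. f y = y"
      proof (rule banach_fix_type[OF k])
        show "\<forall>y z. dist (f y) (f z) \<le> \<kappa> * dist y z"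
        proof (intro allI)
          fix y z
          have "f y - f z = - (S (y - z) - (y - z))" by (simp add: f_def linear_diff[OF lin] algebra_simps)
          then have "dist (f y) (f z) = norm (S (y - z) - (y - z))" by (simp add: dist_norm norm_minus_commute)
          also have "\<dots> \<le> \<kappa> * dist y z" using b by (simp add: dist_norm)
          finally show "dist (f y) (f z) \<le> \<kappa> * dist y z" .
        qed
      qed
      then obtain y where "f y = y" by blast
      then have "S y = c" by (simp add: f_def algebra_simps)
      then show ?thesis by blast
    qed
    then show ?thesis by (metis surjI)
  qed
  have bij: "bij S" using inj surj by (simp add: bij_def)
  have SI: "S (inv S y) = y" for y using surj by (simp add: surj_f_inv_f)
  have IS: "inv S (S y) = y" for y using inj by simp
  have "linear (inv S)"
  proof (rule linearI)
    show "inv S (a + c) = inv S a + inv S c" for a c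
      by (rule injD[OF inj]) (simp add: SI linear_add[OF lin])
    show "inv S (r *\<^sub>R a) = r *\<^sub>R inv S a" for r a
      by (rule injD[OF inj]) (simp add: SI linear_scale[OF lin])
  qed
  moreover have "norm (inv S y) \<le> norm y / (1 - \<kappa>)" for y
    using low[of "inv S y"] k by (simp add: SI field_simps)
  ultimately show ?thesis using bij by blast
qed




lemma countable_dense_subset:
  fixes C :: "'a::metric_space set"
  assumes cC: "countable C" and dC: "\<And>y e. e > 0 \<Longrightarrow> \<exists>c\<in>C. dist c y < e" and X: "X \<noteq> {}"
  shows "\<exists>x::nat \<Rightarrow> 'a. range x \<subseteq> X \<and> (\<forall>a\<in>X. \<forall>e>0. \<exists>k. dist (x k) a < e)"
proof -
  define pick where "pick p = (SOME a. a \<in> X \<and> dist a (fst p) < 1 / Suc (snd p))" for p :: "'a \<times> nat"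
  define I where "I = {p. fst p \<in> C \<and> (\<exists>a\<in>X. dist a (fst p) < 1 / Suc (snd p))}"
  define A where "A = pick ` I"
  have pI: "pick p \<in> X \<and> dist (pick p) (fst p) < 1 / Suc (snd p)" if "p \<in> I" for p
    using that unfolding I_def pick_def by (metis (mono_tags, lifting) mem_Collect_eq someI_ex)
  have "I \<subseteq> C \<times> UNIV" by (auto simp: I_def mem_Times_iff)
  then have "countable I" using cC countable_subset by (metis countable_SIGMA countableI_type)
  then have cA: "countable A" by (simp add: A_def)
  have AX: "A \<subseteq> X" using pI by (auto simp: A_def)
  have dense: "\<exists>b\<in>A. dist b a < e" if a: "a \<in> X" and e: "e > 0" for a e
  proof -
    obtain m :: nat where m: "1 / Suc m < e / 2"
      using e by (metis half_gt_zero_iff nat_approx_posE of_nat_Suc)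
    obtain c where c: "c \<in> C" "dist c a < 1 / Suc m" using dC[of "1 / Suc m" a] by auto
    have "(c, m) \<in> I" unfolding I_def using a c by (auto simp: dist_commute)
    then have "pick (c, m) \<in> A" "dist (pick (c, m)) c < 1 / Suc m" using pI A_def by auto
    moreover have "dist (pick (c, m)) a \<le> dist (pick (c, m)) c + dist c a" by (rule dist_triangle)
    ultimately have "dist (pick (c, m)) a < e" using c m by linarith
    then show ?thesis using \<open>pick (c, m) \<in> A\<close> by blast
  qed
  obtain a0 where "a0 \<in> X" using X by blast
  then obtain b0 where "b0 \<in> A" using dense[of a0 1] by auto
  then have "A \<noteq> {}" by blast
  then have rA: "range (from_nat_into A) = A" by (rule range_from_nat_into[OF _ cA])
  show ?thesis
  proof (rule exI[of _ "from_nat_into A"], intro conjI ballI allI impI)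
    show "range (from_nat_into A) \<subseteq> X" using rA AX by simp
    fix a e assume "a \<in> X" "(e::real) > 0"
    then obtain b where "b \<in> A" "dist b a < e" using dense by blast
    then show "\<exists>k. dist (from_nat_into A k) a < e" using rA by (metis rangeE)
  qed
qed




lemma rat_approx_sum:
  fixes B :: "'a::real_normed_vector set"
  assumes fB: "finite B" and e: "e > 0"
  shows "\<exists>q\<in>PiE B (\<lambda>_. \<rat>). norm ((\<Sum>b\<in>B. u b *\<^sub>R b) - (\<Sum>b\<in>B. q b *\<^sub>R b)) < e"
proof -
  define \<eta> where "\<eta> b = e / ((card B + 1) * (norm b + 1))" for b :: 'a
  have \<eta>pos: "\<eta> b > 0" for b using e unfolding \<eta>_def by (intro divide_pos_pos mult_pos_pos) (auto simp: add_nonneg_pos)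
  have "\<exists>r\<in>\<rat>. u b - \<eta> b < r \<and> r < u b + \<eta> b" for b
    by (rule Rats_dense_in_real) (use \<eta>pos[of b] in simp)
  then obtain q0 where q0: "\<And>b. q0 b \<in> \<rat> \<and> u b - \<eta> b < q0 b \<and> q0 b < u b + \<eta> b" by metis
  define q where "q = restrict q0 B"
  have qP: "q \<in> PiE B (\<lambda>_. \<rat>)" using q0 by (simp add: q_def)
  have trm: "\<bar>u b - q0 b\<bar> * norm b \<le> e / (card B + 1)" for b
  proof -
    have "\<bar>u b - q0 b\<bar> \<le> \<eta> b" using q0[of b] by auto
    then have "\<bar>u b - q0 b\<bar> * norm b \<le> \<eta> b * norm b" by (simp add: mult_right_mono)
    also have "\<dots> \<le> \<eta> b * (norm b + 1)" using \<eta>pos[of b] by simp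
    also have "\<dots> = e / (card B + 1)"
    proof -
      have h1: "norm b + 1 \<noteq> 0" using norm_ge_zero[of b] by linarith
      have h2: "real (card B) + 1 \<noteq> 0" by simp
      show ?thesis unfolding \<eta>_def using h1 h2 by (simp add: divide_simps)
    qed
    finally show ?thesis .
  qed
  have "(\<Sum>b\<in>B. u b *\<^sub>R b) - (\<Sum>b\<in>B. q b *\<^sub>R b) = (\<Sum>b\<in>B. (u b - q0 b) *\<^sub>R b)"
    by (simp add: q_def sum_subtractf scaleR_diff_left)
  then have "norm ((\<Sum>b\<in>B. u b *\<^sub>R b) - (\<Sum>b\<in>B. q b *\<^sub>R b)) \<le> (\<Sum>b\<in>B. \<bar>u b - q0 b\<bar> * norm b)"
    using norm_sum[of "\<lambda>b. (u b - q0 b) *\<^sub>R b" B] by simp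
  also have "\<dots> \<le> (\<Sum>b\<in>B. e / (card B + 1))" by (rule sum_mono) (rule trm)
  also have "\<dots> = card B * e / (card B + 1)" by simp
  also have "\<dots> < e" using e by (simp add: field_simps)
  finally show ?thesis using qP by blast
qed





fun dseq :: "(nat \<Rightarrow> 'a::real_vector \<Rightarrow> 'a) \<Rightarrow> (nat \<Rightarrow> 'a) \<Rightarrow> (nat \<Rightarrow> 'a \<Rightarrow> real) \<Rightarrow> nat \<Rightarrow> 'a list" where
  "dseq g x \<phi> 0 = []"
| "dseq g x \<phi> (Suc k) = dseq g x \<phi> k @ [g k (x k + (\<Sum>i<k. \<phi> i (x k) *\<^sub>R (dseq g x \<phi> k ! i)))]"

lemma dseq_len: "length (dseq g x \<phi> k) = k"
  by (induction k) auto

lemma dseq_nth: "i < k \<Longrightarrow> dseq g x \<phi> k ! i = dseq g x \<phi> (Suc i) ! i"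
proof (induction k)
  case 0 then show ?case by simp
next
  case (Suc k)
  show ?case
  proof (cases "i < k")
    case True
    then have "dseq g x \<phi> (Suc k) ! i = dseq g x \<phi> k ! i"
      by (simp only: dseq.simps(2) nth_append dseq_len) simp
    then show ?thesis using Suc True by simp
  next
    case False
    then have "i = k" using Suc by simp
    then show ?thesis by simp
  qed
qed

definition dd where "dd g x \<phi> k = dseq g x \<phi> (Suc k) ! k"

lemma dd_eq: "dd g x \<phi> k = g k (x k + (\<Sum>i<k. \<phi> i (x k) *\<^sub>R dd g x \<phi> i))"
proof -
  have "dd g x \<phi> k = g k (x k + (\<Sum>i<k. \<phi> i (x k) *\<^sub>R (dseq g x \<phi> k ! i)))"
    unfolding dd_def by (simp only: dseq.simps(2) nth_append dseq_len) simp
  also have "(\<Sum>i<k. \<phi> i (x k) *\<^sub>R (dseq g x \<phi> k ! i)) = (\<Sum>i<k. \<phi> i (x k) *\<^sub>R dd g x \<phi> i)"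
    by (rule sum.cong) (auto simp: dd_def dseq_nth)
  finally show ?thesis .
qed




theorem lemma3p1:
  fixes Q :: "nat \<Rightarrow> 'a::banach \<Rightarrow> 'a" and X :: "'a set" and \<delta> :: real
  assumes "is_FDD Q"
    and "subspace X" and "closed X"
    and "\<delta> > 0"
  shows "\<exists>T. bounded_linear T \<and> bij T \<and> bounded_linear (inv T) \<and>
             onorm (\<lambda>y. T y - y) < \<delta> \<and>
             density_condition X (\<lambda>j. T \<circ> Q j \<circ> inv T)"
proof -
  have QL: "\<And>j. j \<ge> 1 \<Longrightarrow> bounded_linear (Q j)"
    and QQ: "\<And>j y. j \<ge> 1 \<Longrightarrow> Q j (Q j y) = Q j y"
    and QB: "\<And>j. j \<ge> 1 \<Longrightarrow> \<exists>B. finite B \<and> range (Q j) \<subseteq> span B"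
    and QO: "\<And>i j y. i \<ge> 1 \<Longrightarrow> j \<ge> 1 \<Longrightarrow> i \<noteq> j \<Longrightarrow> Q i (Q j y) = 0"
    and Qc: "\<And>y. (\<lambda>n. \<Sum>j\<in>{1..n}. Q j y) \<longlonglongrightarrow> y"
    using assms(1) unfolding is_FDD_def by (auto simp: fun_eq_iff)
  define P where "P n y = (\<Sum>j\<in>{1..n}. Q j y)" for n y
  have PL: "bounded_linear (P n)" for n
    unfolding P_def by (intro bounded_linear_sum QL) auto
  have linP: "linear (P n)" for n using PL bounded_linear.linear by blast
  have Pc: "(\<lambda>n. P n y) \<longlonglongrightarrow> y" for y unfolding P_def by (rule Qc)
  have QP: "Q i (P n y) = (if i \<le> n then Q i y else 0)" if i: "i \<ge> 1" for i n y
  proof -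
    have "Q i (P n y) = (\<Sum>j\<in>{1..n}. Q i (Q j y))" unfolding P_def
      by (rule linear_sum[OF bounded_linear.linear[OF QL[OF i]]])
    also have "\<dots> = (\<Sum>j\<in>{1..n}. if i = j then Q i y else 0)"
      by (rule sum.cong) (use QQ QO i in auto)
    also have "\<dots> = (if i \<le> n then Q i y else 0)" using i by simp
    finally show ?thesis .
  qed
  have PP: "P m (P n y) = P n y" if nm: "n \<le> m" for n m y
  proof -
    have "P m (P n y) = (\<Sum>j\<in>{1..m}. if j \<le> n then Q j y else 0)"
      unfolding P_def[of m] by (rule sum.cong) (auto simp: QP)
    also have "\<dots> = (\<Sum>j\<in>{j\<in>{1..m}. j \<le> n}. Q j y)" by (rule sum.inter_filter[symmetric]) simp
    also have "{j\<in>{1..m}. j \<le> n} = {1..n}" using nm by auto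
    finally show ?thesis by (simp add: P_def)
  qed
  define F where "F = {y. \<exists>n. y = P n y}"
  have PF: "P n y \<in> F" for n y unfolding F_def using PP[of n n y] by (auto intro!: exI[of _ n])
  have Fm: "y = P m y" if "y = P n y" "n \<le> m" for y n m
    using PP[of n m y] that by simp
  have subF: "subspace F"
    unfolding subspace_def
  proof (intro conjI ballI allI)
    show "0 \<in> F" unfolding F_def by (auto simp: P_def intro: exI[of _ 0])
    fix a b assume "a \<in> F" "b \<in> F"
    then obtain n1 n2 where n: "a = P n1 a" "b = P n2 b" unfolding F_def by blast
    have "a = P (max n1 n2) a" "b = P (max n1 n2) b" using Fm n by auto
    then have "a + b = P (max n1 n2) (a + b)" by (simp add: linear_add[OF linP])
    then show "a + b \<in> F" unfolding F_def by blast
  next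
    fix c a assume "a \<in> F"
    then obtain n where "a = P n a" unfolding F_def by blast
    then have "c *\<^sub>R a = P n (c *\<^sub>R a)" by (simp add: linear_scale[OF linP])
    then show "c *\<^sub>R a \<in> F" unfolding F_def by blast
  qed
  have Fd: "\<exists>f\<in>F. norm (f - z) < e" if e0: "e > 0" for z e
  proof -
    obtain N where "\<forall>n\<ge>N. norm (P n z - z) < e" using LIMSEQ_D[OF Pc e0] by blast
    then show ?thesis using PF by blast
  qed
  define Bq where "Bq j = (SOME B. finite B \<and> range (Q j) \<subseteq> span B)" for j
  have Bq: "finite (Bq j) \<and> range (Q j) \<subseteq> span (Bq j)" if "j \<ge> 1" for j
    unfolding Bq_def using someI_ex[OF QB[OF that]] .
  define Bn where "Bn n = (\<Union>j\<in>{1..n}. Bq j)" for n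
  have fBn: "finite (Bn n)" for n unfolding Bn_def using Bq by auto
  have rBn: "range (P n) \<subseteq> span (Bn n)" for n
  proof
    fix z assume "z \<in> range (P n)"
    then obtain y where z: "z = P n y" by blast
    have "Q j y \<in> span (Bn n)" if j: "j \<in> {1..n}" for j
    proof -
      have "Q j y \<in> span (Bq j)" using Bq[of j] j by auto
      moreover have "span (Bq j) \<subseteq> span (Bn n)" unfolding Bn_def using j by (intro span_mono) auto
      ultimately show ?thesis by blast
    qed
    then show "z \<in> span (Bn n)" unfolding z P_def by (intro span_sum) auto
  qed
  note sep = sep_functional[OF PL fBn rBn Pc]
  define C where "C = (\<Union>n. (\<lambda>q. \<Sum>b\<in>Bn n. q b *\<^sub>R b) ` PiE (Bn n) (\<lambda>_. \<rat>))"
  have cC: "countable C" unfolding C_def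
    by (intro countable_UN countable_image countable_PiE fBn countable_rat) auto
  have dC: "\<exists>c\<in>C. dist c y < e" if e: "e > 0" for y e
  proof -
    have "e / 2 > 0" using e by simp
    from LIMSEQ_D[OF Pc this, of y] obtain n where n: "norm (P n y - y) < e / 2" by blast
    have "P n y \<in> span (Bn n)" using rBn by auto
    then obtain u where u: "P n y = (\<Sum>v\<in>Bn n. u v *\<^sub>R v)" using span_finite[OF fBn] by auto
    obtain q where q: "q \<in> PiE (Bn n) (\<lambda>_. \<rat>)"
      "norm ((\<Sum>b\<in>Bn n. u b *\<^sub>R b) - (\<Sum>b\<in>Bn n. q b *\<^sub>R b)) < e / 2"
      using rat_approx_sum[OF fBn, where e = "e/2" and u = u] e by auto
    have "(\<Sum>b\<in>Bn n. q b *\<^sub>R b) \<in> C" unfolding C_def using q(1) by blast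
    moreover have "dist (\<Sum>b\<in>Bn n. q b *\<^sub>R b) y < e"
    proof -
      have "dist (\<Sum>b\<in>Bn n. q b *\<^sub>R b) y \<le> dist (\<Sum>b\<in>Bn n. q b *\<^sub>R b) (P n y) + dist (P n y) y"
        by (rule dist_triangle)
      also have "\<dots> < e / 2 + e / 2" using q(2) n u by (intro add_strict_mono) (auto simp: dist_norm norm_minus_commute)
      finally show ?thesis by simp
    qed
    ultimately show ?thesis by blast
  qed
  have X0: "0 \<in> X" using assms(2) subspace_0 by blast
  have Xne: "X \<noteq> {}" using X0 by blast
  have exx: "\<exists>x::nat \<Rightarrow> 'a. range x \<subseteq> X \<and> (\<forall>a\<in>X. \<forall>e>0. \<exists>k. dist (x k) a < e)"
    by (rule countable_dense_subset[OF cC _ Xne]) (rule dC)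
  then obtain x :: "nat \<Rightarrow> 'a" where xX: "range x \<subseteq> X" and xd: "\<forall>a\<in>X. \<forall>e>0. \<exists>k. dist (x k) a < e"
    by (elim exE conjE)
  define \<phi> where "\<phi> k = (if x k \<notin> span (x ` {..<k})
     then (SOME \<phi>. bounded_linear \<phi> \<and> (\<forall>v\<in>x ` {..<k}. \<phi> v = 0) \<and> \<phi> (x k) = (1::real))
     else (\<lambda>_. 0))" for k
  have \<phi>P: "bounded_linear (\<phi> k) \<and> (\<forall>v\<in>x ` {..<k}. \<phi> k v = 0) \<and> \<phi> k (x k) = 1"
    if "x k \<notin> span (x ` {..<k})" for k
  proof -
    have "\<exists>\<phi>. bounded_linear \<phi> \<and> (\<forall>v\<in>x ` {..<k}. \<phi> v = 0) \<and> \<phi> (x k) = (1::real)"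
      using sep[of "x ` {..<k}" "x k"] that by auto
    from someI_ex[OF this] show ?thesis using that by (simp add: \<phi>_def)
  qed
  have \<phi>bl: "bounded_linear (\<phi> k)" for k
    using \<phi>P[of k] by (cases "x k \<notin> span (x ` {..<k})") (auto simp: \<phi>_def bounded_linear_zero)
  have \<phi>0: "\<phi> i (x k) = 0" if "k < i" for i k
    using \<phi>P[of i] that by (cases "x i \<notin> span (x ` {..<i})") (auto simp: \<phi>_def)
  define N where "N k = onorm (\<phi> k) + 1" for k
  have Npos: "N k > 0" for k using onorm_pos_le[OF \<phi>bl[of k]] by (simp add: N_def)
  have \<phi>N: "\<bar>\<phi> k y\<bar> \<le> N k * norm y" for k y
  proof -
    have "\<bar>\<phi> k y\<bar> \<le> onorm (\<phi> k) * norm y" using onorm[OF \<phi>bl[of k], of y] by simp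
    also have "\<dots> \<le> N k * norm y" by (simp add: N_def mult_right_mono)
    finally show ?thesis .
  qed
  define \<kappa> where "\<kappa> = min (1/2) (\<delta>/4)"
  have \<kappa>pos: "\<kappa> > 0" and \<kappa>h: "\<kappa> \<le> 1/2" and \<kappa>d: "\<kappa> \<le> \<delta>/4" using assms(4) by (auto simp: \<kappa>_def)
  define \<epsilon> where "\<epsilon> k = \<kappa> / (2 ^ Suc k * N k)" for k
  have \<epsilon>pos: "\<epsilon> k > 0" for k using \<kappa>pos Npos[of k] by (simp add: \<epsilon>_def)
  define g where "g k z = (SOME f. f \<in> F \<and> norm (f - z) < \<epsilon> k) - z" for k z
  have gP: "z + g k z \<in> F \<and> norm (g k z) < \<epsilon> k" for k z
  proof -
    have "\<exists>f. f \<in> F \<and> norm (f - z) < \<epsilon> k" using Fd[OF \<epsilon>pos[of k], of z] by blast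
    from someI_ex[OF this] show ?thesis by (simp add: g_def)
  qed
  define d where "d = dd g x \<phi>"
  have d_eq: "d k = g k (x k + (\<Sum>i<k. \<phi> i (x k) *\<^sub>R d i))" for k
    unfolding d_def by (rule dd_eq)
  have dn: "norm (d k) < \<epsilon> k" for k using d_eq gP by metis
  have tb: "norm (\<phi> i y *\<^sub>R d i) \<le> norm y * \<kappa> * (1/2) ^ Suc i" for i y
  proof -
    have "norm (\<phi> i y *\<^sub>R d i) = \<bar>\<phi> i y\<bar> * norm (d i)" by simp
    also have "\<dots> \<le> (N i * norm y) * \<epsilon> i"
      using \<phi>N[of i y] dn[of i] by (intro mult_mono) auto
    also have "\<dots> = norm y * \<kappa> * (1/2) ^ Suc i"
      using Npos[of i] by (simp add: \<epsilon>_def field_simps power_divide)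
    finally show ?thesis .
  qed
  have gs: "summable (\<lambda>i. norm y * \<kappa> * (1/2::real) ^ Suc i)" for y
    using summable_mult[OF sums_summable[OF power_half_series], of "norm y * \<kappa>"] by simp
  have gsum: "(\<Sum>i. norm y * \<kappa> * (1/2::real) ^ Suc i) = norm y * \<kappa>" for y
    using sums_unique[OF sums_mult[OF power_half_series, of "norm y * \<kappa>"]] by simp
  have sn: "summable (\<lambda>i. norm (\<phi> i y *\<^sub>R d i))" for y
    by (rule summable_norm_comparison_test[OF _ gs]) (use tb in auto)
  have sm: "summable (\<lambda>i. \<phi> i y *\<^sub>R d i)" for y by (rule summable_norm_cancel[OF sn])
  define K where "K y = (\<Sum>i. \<phi> i y *\<^sub>R d i)" for y
  have Kb: "norm (K y) \<le> \<kappa> * norm y" for y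
  proof -
    have "norm (K y) \<le> (\<Sum>i. norm (\<phi> i y *\<^sub>R d i))" unfolding K_def by (rule summable_norm[OF sn])
    also have "\<dots> \<le> (\<Sum>i. norm y * \<kappa> * (1/2::real) ^ Suc i)" by (rule suminf_le[OF tb sn gs])
    also have "\<dots> = norm y * \<kappa>" by (rule gsum)
    finally show ?thesis by (simp add: mult.commute)
  qed
  have linK: "linear K"
  proof (rule linearI)
    fix a b
    have "K (a + b) = (\<Sum>i. \<phi> i a *\<^sub>R d i + \<phi> i b *\<^sub>R d i)"
      unfolding K_def by (simp add: linear_add[OF bounded_linear.linear[OF \<phi>bl]] scaleR_add_left)
    also have "\<dots> = K a + K b" unfolding K_def by (rule suminf_add[OF sm sm, symmetric])
    finally show "K (a + b) = K a + K b" .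
  next
    fix r a
    have "K (r *\<^sub>R a) = (\<Sum>i. r *\<^sub>R (\<phi> i a *\<^sub>R d i))"
      unfolding K_def by (simp add: linear_scale[OF bounded_linear.linear[OF \<phi>bl]])
    also have "\<dots> = r *\<^sub>R K a" unfolding K_def by (rule suminf_scaleR_right[OF sm, symmetric])
    finally show "K (r *\<^sub>R a) = r *\<^sub>R K a" .
  qed
  define S where "S y = y + K y" for y
  have linS: "linear S" unfolding S_def[abs_def] by (intro linear_compose_add linK) (simp add: linear_id[unfolded id_def])
  have Sb: "norm (S y - y) \<le> \<kappa> * norm y" for y using Kb by (simp add: S_def)
  have \<kappa>1: "\<kappa> < 1" using \<kappa>h by simp
  obtain bijS: "bij S" and linT: "linear (inv S)" and Tb: "\<And>y. norm (inv S y) \<le> norm y / (1 - \<kappa>)"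
    using neumann[OF linS less_imp_le[OF \<kappa>pos] \<kappa>1 Sb] by blast
  define T where "T = inv S"
  have Sx: "S (x k) = x k + (\<Sum>i<Suc k. \<phi> i (x k) *\<^sub>R d i)" for k
  proof -
    have "K (x k) = (\<Sum>i<Suc k. \<phi> i (x k) *\<^sub>R d i)" unfolding K_def
      by (rule suminf_finite) (auto simp: \<phi>0)
    then show ?thesis by (simp add: S_def)
  qed
  have SxF: "S (x k) \<in> F" for k
  proof (induction k rule: less_induct)
    case (less k)
    show ?case
    proof (cases "x k \<notin> span (x ` {..<k})")
      case True
      then have "\<phi> k (x k) = 1" using \<phi>P by blast
      then have "S (x k) = (x k + (\<Sum>i<k. \<phi> i (x k) *\<^sub>R d i)) + d k" using Sx[of k] by simp
      also have "\<dots> \<in> F" using d_eq[of k] gP by metis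
      finally show ?thesis .
    next
      case False
      then have "S (x k) \<in> S ` span (x ` {..<k})" by blast
      also have "\<dots> = span (S ` x ` {..<k})" by (rule span_linear_image[OF linS, symmetric])
      also have "\<dots> \<subseteq> F" using less by (intro span_minimal subF) auto
      finally show ?thesis .
    qed
  qed
  define D where "D = span (range x)"
  have SD: "S z \<in> F" if "z \<in> D" for z
  proof -
    have "S z \<in> S ` span (range x)" using that D_def by blast
    also have "\<dots> = span (S ` range x)" by (rule span_linear_image[OF linS, symmetric])
    also have "\<dots> \<subseteq> F" using SxF by (intro span_minimal subF) auto
    finally show ?thesis .
  qed
  have DX: "D \<subseteq> X" unfolding D_def using xX assms(2) by (intro span_minimal) auto
  have XD: "X \<subseteq> closure D"
  proof
    fix a assume a: "a \<in> X"
    show "a \<in> closure D" unfolding closure_approachable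
    proof (intro allI impI)
      fix e :: real assume "e > 0"
      then obtain k where "dist (x k) a < e" using xd a by blast
      moreover have "x k \<in> D" unfolding D_def by (simp add: span_base)
      ultimately show "\<exists>y\<in>D. dist y a < e" by blast
    qed
  qed
  have injS: "inj S" using bijS bij_is_inj by blast
  have surjS: "surj S" using bijS bij_is_surj by blast
  have ST: "S (T y) = y" for y unfolding T_def using surjS by (simp add: surj_f_inv_f)
  have TS: "T (S y) = y" for y unfolding T_def using injS by simp
  have invT: "inv T = S" unfolding T_def using bijS by (rule inv_inv_eq)
  have blT: "bounded_linear T"
  proof (rule bounded_linear_intro)
    show "T (a + b) = T a + T b" for a b using linT by (simp add: T_def linear_add)
    show "T (r *\<^sub>R a) = r *\<^sub>R T a" for r a using linT by (simp add: T_def linear_scale)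
    show "norm (T a) \<le> norm a * (1 / (1 - \<kappa>))" for a using Tb[of a] by (simp add: T_def)
  qed
  have blS: "bounded_linear S"
  proof (rule bounded_linear_intro)
    show "S (a + b) = S a + S b" for a b using linS by (simp add: linear_add)
    show "S (r *\<^sub>R a) = r *\<^sub>R S a" for r a using linS by (simp add: linear_scale)
    show "norm (S a) \<le> norm a * (1 + \<kappa>)" for a
    proof -
      have "norm (S a) \<le> norm a + norm (K a)" by (simp add: S_def norm_triangle_ineq)
      then show ?thesis using Kb[of a] by (simp add: algebra_simps)
    qed
  qed
  have onT: "onorm (\<lambda>y. T y - y) < \<delta>"
  proof -
    have "norm (T y - y) \<le> (\<kappa> / (1 - \<kappa>)) * norm y" for y
    proof -
      have "T y - y = - K (T y)" using ST[of y] by (simp add: S_def eq_neg_iff_add_eq_0 algebra_simps)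
      then have "norm (T y - y) = norm (K (T y))" by simp
      also have "\<dots> \<le> \<kappa> * norm (T y)" by (rule Kb)
      also have "\<dots> \<le> \<kappa> * (norm y / (1 - \<kappa>))"
        using mult_left_mono[OF Tb[of y] less_imp_le[OF \<kappa>pos]] by (simp add: T_def)
      finally show ?thesis by simp
    qed
    then have "onorm (\<lambda>y. T y - y) \<le> \<kappa> / (1 - \<kappa>)"
      using \<kappa>pos \<kappa>1 by (intro onorm_bound) auto
    also have "\<kappa> / (1 - \<kappa>) \<le> 2 * \<kappa>" using \<kappa>pos \<kappa>h by (simp add: field_simps)
    also have "\<dots> < \<delta>" using \<kappa>d assms(4) by simp
    finally show ?thesis .
  qed
  have dens: "density_condition X (\<lambda>j. T \<circ> Q j \<circ> inv T)"
    unfolding density_condition_def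
  proof (rule exI[of _ D], intro conjI ballI)
    show "D \<subseteq> X" by (rule DX)
    show "X \<subseteq> closure D" by (rule XD)
    fix z assume "z \<in> D"
    then obtain n where n: "S z = P n (S z)" using SD unfolding F_def by blast
    have "(\<Sum>j\<in>{1..n}. (T \<circ> Q j \<circ> inv T) z) = T (P n (S z))"
      unfolding invT P_def o_def by (rule linear_sum[OF linT[folded T_def], symmetric])
    also have "\<dots> = z" using n TS by simp
    finally show "\<exists>n. z = (\<Sum>j\<in>{1..n}. (T \<circ> Q j \<circ> inv T) z)" by metis
  qed
  show ?thesis
    using blT bijS blS onT dens invT unfolding T_def by (auto intro: bij_imp_bij_inv)
qed


end
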